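(* In Algorithm MV (see context), WHP every correct process decides.
   Context: System and adversary: a well-known static set $\Pi$ of $n$ processes; an adversary may adaptively corrupt up to $f=(\frac13-\epsilon)n$ processes during a run, where $\frac{1}{2\ln n}<\epsilon<\frac13$. Corrupted (Byzantine) processes may deviate arbitrarily; uncorrupted processes are correct. Once the adversary corrupts a process it cannot replace messages that process already sent while correct. Every pair of processes is connected by a reliable authenticated link; the network is asynchronous. There is a trusted PKI; the adversary is computationally bounded; $\langle v\rangle_i$ denotes $v$ signed by $p_i$. Validated committee sampling: each $p_i$ has a private function $\mathit{sample}_i(s,\lambda)$ returning $\langle v_i,\sigma_i\rangle$ with $v_i\in\{\mathit{true},\mathit{false}\}$ ($p_i$ is "sampled" iff $v_i=\mathit{true}$, probability $\lambda/n$) and an unforgeable publicly verifiable proof $\sigma_i$; "validly sampled $p_j$" means the message carries a valid such proof. Let $C(s,\lambda)$ be the committee for $s,\lambda$. Parameters: $\lambda=8\ln n$; $\frac1\lambda<d<\frac\epsilon3-\frac1{3\lambda}$; $W=\lceil(\frac23+3d)\lambda\rceil$, $B=\lfloor(\frac13-d)\lambda\rfloor$. Assumed WHP for each committee: (S3) at least $W$ members are correct; (S4) at most $B$ members are Byzantine; (S5) any two $W$-subsets of the committee intersect in at least $B+1$ processes. WHP means with probability tending to $1$ as $n\to\infty$. The binary BA used is a black-box Binary Strong BA WHP: WHP strong unanimity (if all correct processes propose the same bit, any deciding correct process decides it), agreement, and termination. Algorithm MV (code for $p_i$ with input $v_i$; local: $\mathit{count}=0$, empty sets $\mathit{init\text{-}set},\mathit{init\text{-}values\text{-}set},\mathit{converge\text{-}set}$):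 (1) If $p_i$ is sampled for $(\textsc{init},\lambda)$, broadcast $\langle\textsc{init},v_i\rangle_i$. (2) On receiving $\langle\textsc{init},v_j\rangle_j$ from validly sampled $p_j$: add $j$ to $\mathit{init\text{-}set}$, $v_j$ to $\mathit{init\text{-}values\text{-}set}$. If $p_i$ is sampled for $(\textsc{converge},\lambda)$ and $|\mathit{init\text{-}set}|=W$ for the first time: if $\mathit{init\text{-}values\text{-}set}=\{v_i\}$, batch the $W$ signed \textsc{init} messages into $QC_{v_i}$ and send $\langle\textsc{converge},\mathit{true},QC_{v_i}\rangle_i$ to all; else send $\langle\textsc{converge},\mathit{false},\bot\rangle_i$ to all. (3) On receiving $\langle\textsc{converge},\mathit{is\_content},QC_v\rangle_j$ from validly sampled $p_j$: add $j$ to $\mathit{converge\text{-}set}$; if $\mathit{is\_content}=\mathit{true}$ increment $\mathit{count}$. When $|\mathit{converge\text{-}set}|=W$ for the first time: $\mathit{alert}\gets(\mathit{count}<B+1)$; run binary BA on $\mathit{alert}$; if the output is $\mathit{true}$ decide $\bot$; else wait for some $\langle\textsc{converge},\mathit{true},QC_v\rangle_j$ from a validly sampled $p_j$ and decide $v$. A valid $QC_v$ consists of $W$ signed \textsc{init} messages on $v$ from $W$ distinct validly sampled processes. *)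

theory Defs
  imports "HOL-Probability.Probability"
begin

text \<open>Processes are the naturals below n. Tags of the two committees used by MV.\<close>

datatype tag = InitT | ConvT

text \<open>Messages. A quorum certificate QC on v is represented by the value v and the set of
  processes whose signed INIT messages on v it batches; bottom is None.\<close>

datatype 'v msg = Init 'v | Converge bool "('v \<times> nat set) option"

fun same_kind :: "'v msg \<Rightarrow> 'v msg \<Rightarrow> bool" where
  "same_kind (Init _) (Init _) = True"
| "same_kind (Converge _ _) (Converge _ _) = True"
| "same_kind _ _ = False"

text \<open>A run (one possible outcome of the random sampling and the adversary's behaviour).
  corrupted: the processes corrupted at some point (Byzantine); everybody else is correct.
  sampled t j: the value v_j of sample_j(t, lambda).
  input j: the input of p_j.
  deliv i t: the message (with its authenticated sender) delivered to p_i at local step t.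
  ba_out i: the (eventual) output of the binary BA black box at p_i, if any.\<close>

record 'v run =
  corrupted :: "nat set"
  sampled :: "tag \<Rightarrow> nat \<Rightarrow> bool"
  input :: "nat \<Rightarrow> 'v"
  deliv :: "nat \<Rightarrow> nat \<Rightarrow> (nat \<times> 'v msg) option"
  ba_out :: "nat \<Rightarrow> bool option"

definition lam :: "nat \<Rightarrow> real" where
  "lam n = 8 * ln (real n)"

definition Wq :: "(nat \<Rightarrow> real) \<Rightarrow> nat \<Rightarrow> nat" where
  "Wq d n = nat \<lceil>(2/3 + 3 * d n) * lam n\<rceil>"

definition Bq :: "(nat \<Rightarrow> real) \<Rightarrow> nat \<Rightarrow> nat" where
  "Bq d n = nat \<lfloor>(1/3 - d n) * lam n\<rfloor>"

definition committee :: "nat \<Rightarrow> 'v run \<Rightarrow> tag \<Rightarrow> nat set" where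
  "committee n r t = {j. j < n \<and> sampled r t j}"

definition processed :: "'v run \<Rightarrow> nat \<Rightarrow> nat \<Rightarrow> nat \<Rightarrow> 'v msg \<Rightarrow> bool" where
  "processed r i t j m \<longleftrightarrow> deliv r i t = Some (j, m) \<and>
     \<not> (\<exists>t' < t. \<exists>m'. deliv r i t' = Some (j, m') \<and> same_kind m m')"

text \<open>Local variables of p_i after processing the messages delivered at steps before t.\<close>

definition init_set :: "'v run \<Rightarrow> nat \<Rightarrow> nat \<Rightarrow> nat set" where
  "init_set r i t = {j. \<exists>t' < t. \<exists>v. processed r i t' j (Init v) \<and> sampled r InitT j}"

definition init_values :: "'v run \<Rightarrow> nat \<Rightarrow> nat \<Rightarrow> 'v set" where
  "init_values r i t = {v. \<exists>t' < t. \<exists>j. processed r i t' j (Init v) \<and> sampled r InitT j}"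

definition converge_set :: "'v run \<Rightarrow> nat \<Rightarrow> nat \<Rightarrow> nat set" where
  "converge_set r i t = {j. \<exists>t' < t. \<exists>b q. processed r i t' j (Converge b q) \<and> sampled r ConvT j}"

definition count :: "'v run \<Rightarrow> nat \<Rightarrow> nat \<Rightarrow> nat" where
  "count r i t = card {j. \<exists>t' < t. \<exists>q. processed r i t' j (Converge True q) \<and> sampled r ConvT j}"

definition init_trigger :: "nat \<Rightarrow> 'v run \<Rightarrow> nat \<Rightarrow> nat option" where
  "init_trigger W r i =
     (if \<exists>t. W \<le> card (init_set r i t) then Some (LEAST t. W \<le> card (init_set r i t)) else None)"

definition conv_trigger :: "nat \<Rightarrow> 'v run \<Rightarrow> nat \<Rightarrow> nat option" where
  "conv_trigger W r i =
     (if \<exists>t. W \<le> card (converge_set r i t) then Some (LEAST t. W \<le> card (converge_set r i t)) else None)"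

definition correct_sends :: "nat \<Rightarrow> 'v run \<Rightarrow> nat \<Rightarrow> 'v msg \<Rightarrow> bool" where
  "correct_sends W r j m \<longleftrightarrow>
     (sampled r InitT j \<and> m = Init (input r j)) \<or>
     (sampled r ConvT j \<and> (\<exists>t. init_trigger W r j = Some t \<and>
        m = (if init_values r j t = {input r j}
             then Converge True (Some (input r j, init_set r j t))
             else Converge False None)))"

definition ba_in :: "nat \<Rightarrow> nat \<Rightarrow> 'v run \<Rightarrow> nat \<Rightarrow> bool option" where
  "ba_in W B r i = (case conv_trigger W r i of None \<Rightarrow> None
                     | Some t \<Rightarrow> Some (count r i t < B + 1))"

text \<open>A QC on v is valid if it consists of W genuinely signed INIT messages on v from W distinct
  validly sampled processes; by unforgeability a correct process only ever signs INIT on its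
  own input, while a Byzantine process may sign anything.\<close>

definition valid_qc :: "nat \<Rightarrow> 'v run \<Rightarrow> 'v \<Rightarrow> nat set \<Rightarrow> bool" where
  "valid_qc W r v S \<longleftrightarrow> card S = W \<and>
     (\<forall>k\<in>S. sampled r InitT k \<and> (k \<notin> corrupted r \<longrightarrow> input r k = v))"

text \<open>p_i decides: either BA outputs true (decide bottom), or BA outputs false and p_i has
  received some CONVERGE true message with a valid QC from a validly sampled process.\<close>

definition decides :: "nat \<Rightarrow> 'v run \<Rightarrow> nat \<Rightarrow> bool" where
  "decides W r i \<longleftrightarrow> ba_out r i = Some True \<or>
     (ba_out r i = Some False \<and>
      (\<exists>t j v S. processed r i t j (Converge True (Some (v, S))) \<and> sampled r ConvT j \<and>
                 valid_qc W r v S))"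

definition valid_run :: "nat \<Rightarrow> nat \<Rightarrow> nat \<Rightarrow> real \<Rightarrow> 'v run \<Rightarrow> bool" where
  "valid_run n W B eps r \<longleftrightarrow>
     corrupted r \<subseteq> {..<n} \<and>
     real (card (corrupted r)) \<le> (1/3 - eps) * real n \<and>
     (\<forall>i t j m. i < n \<longrightarrow> deliv r i t = Some (j, m) \<longrightarrow> j < n) \<and>
     (\<forall>i j m. i < n \<longrightarrow> j < n \<longrightarrow> i \<notin> corrupted r \<longrightarrow> j \<notin> corrupted r \<longrightarrow>
        correct_sends W r j m \<longrightarrow> (\<exists>t. deliv r i t = Some (j, m))) \<and>
     (\<forall>i j m t. i < n \<longrightarrow> j < n \<longrightarrow> i \<notin> corrupted r \<longrightarrow> j \<notin> corrupted r \<longrightarrow>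
        deliv r i t = Some (j, m) \<longrightarrow> correct_sends W r j m) \<and>
     (\<forall>i < n. i \<notin> corrupted r \<longrightarrow> ba_out r i \<noteq> None \<longrightarrow> ba_in W B r i \<noteq> None)"

definition ba_termination :: "nat \<Rightarrow> nat \<Rightarrow> nat \<Rightarrow> 'v run \<Rightarrow> bool" where
  "ba_termination n W B r \<longleftrightarrow>
     (\<forall>i < n. i \<notin> corrupted r \<longrightarrow> ba_in W B r i \<noteq> None) \<longrightarrow>
     (\<forall>i < n. i \<notin> corrupted r \<longrightarrow> ba_out r i \<noteq> None)"

definition ba_agreement :: "nat \<Rightarrow> 'v run \<Rightarrow> bool" where
  "ba_agreement n r \<longleftrightarrow>
     (\<forall>i < n. \<forall>j < n. i \<notin> corrupted r \<longrightarrow> j \<notin> corrupted r \<longrightarrow>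
        ba_out r i \<noteq> None \<longrightarrow> ba_out r j \<noteq> None \<longrightarrow> ba_out r i = ba_out r j)"

definition ba_strong_unanimity :: "nat \<Rightarrow> nat \<Rightarrow> nat \<Rightarrow> 'v run \<Rightarrow> bool" where
  "ba_strong_unanimity n W B r \<longleftrightarrow>
     (\<forall>b. (\<forall>i < n. i \<notin> corrupted r \<longrightarrow> ba_in W B r i = Some b) \<longrightarrow>
          (\<forall>i < n. i \<notin> corrupted r \<longrightarrow> ba_out r i \<noteq> None \<longrightarrow> ba_out r i = Some b))"

definition whp :: "(nat \<Rightarrow> 'a measure) \<Rightarrow> (nat \<Rightarrow> 'a \<Rightarrow> bool) \<Rightarrow> bool" where
  "whp M P \<longleftrightarrow> (\<exists>E. (\<forall>n. E n \<in> sets (M n) \<and> E n \<subseteq> {x \<in> space (M n). P n x}) \<and>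
                     (\<lambda>n. measure (M n) (E n)) \<longlonglongrightarrow> 1)"

end

theory Submission
  imports Defs
begin

lemma sk_refl: "same_kind m m" by (cases m) auto
lemma sk_trans: "same_kind a b \<Longrightarrow> same_kind b c \<Longrightarrow> same_kind a c"
  by (cases a; cases b; cases c) auto

lemma first_proc:
  assumes "deliv r i t = Some (j, m)"
  shows "\<exists>t'\<le>t. \<exists>m'. processed r i t' j m' \<and> same_kind m m'"
proof -
  define P where "P = (\<lambda>t. \<exists>m'. deliv r i t = Some (j, m') \<and> same_kind m m')"
  have Pt: "P t" using assms sk_refl unfolding P_def by blast
  define t0 where "t0 = (LEAST t. P t)"
  have P0: "P t0" unfolding t0_def by (rule LeastI[of P, OF Pt])
  have le: "t0 \<le> t" unfolding t0_def by (rule Least_le[of P, OF Pt])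
  from P0 obtain m' where m': "deliv r i t0 = Some (j, m')" "same_kind m m'" unfolding P_def by blast
  have "processed r i t0 j m'"
    unfolding processed_def
  proof (intro conjI m'(1) notI)
    assume "\<exists>t'<t0. \<exists>m''. deliv r i t' = Some (j, m'') \<and> same_kind m' m''"
    then obtain t' m'' where "t' < t0" "deliv r i t' = Some (j, m'')" "same_kind m' m''" by blast
    hence "P t'" unfolding P_def using m'(2) sk_trans by blast
    hence "t0 \<le> t'" unfolding t0_def by (rule Least_le)
    with \<open>t' < t0\<close> show False by simp
  qed
  thus ?thesis using le m'(2) by blast
qed

lemma init_set_mono: "t \<le> t' \<Longrightarrow> init_set r i t \<subseteq> init_set r i t'"
  unfolding init_set_def by force
lemma conv_set_mono: "t \<le> t' \<Longrightarrow> converge_set r i t \<subseteq> converge_set r i t'"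
  unfolding converge_set_def by force

lemma init_set_sub: "init_set r i t \<subseteq> (\<lambda>t'. fst (the (deliv r i t'))) ` {..<t}"
  unfolding init_set_def processed_def by force
lemma conv_set_sub: "converge_set r i t \<subseteq> (\<lambda>t'. fst (the (deliv r i t'))) ` {..<t}"
  unfolding converge_set_def processed_def by force

lemma init_set_fin: "finite (init_set r i t)"
  by (rule finite_subset[OF init_set_sub]) simp
lemma conv_set_fin: "finite (converge_set r i t)"
  by (rule finite_subset[OF conv_set_sub]) simp

lemma init_set_0: "init_set r i 0 = {}" unfolding init_set_def by auto

lemma init_set_Suc: "init_set r i (Suc t) \<subseteq> insert (fst (the (deliv r i t))) (init_set r i t)"
proof
  fix x assume "x \<in> init_set r i (Suc t)"
  then obtain t' v where "t' < Suc t" "processed r i t' x (Init v)" "sampled r InitT x"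
    unfolding init_set_def by blast
  show "x \<in> insert (fst (the (deliv r i t))) (init_set r i t)"
  proof (cases "t' = t")
    case True
    then show ?thesis using \<open>processed r i t' x (Init v)\<close> unfolding processed_def by simp
  next
    case False
    hence "t' < t" using \<open>t' < Suc t\<close> by simp
    hence "x \<in> init_set r i t" unfolding init_set_def using \<open>processed r i t' x (Init v)\<close> \<open>sampled r InitT x\<close> by blast
    thus ?thesis by simp
  qed
qed

lemma init_set_card_Suc: "card (init_set r i (Suc t)) \<le> card (init_set r i t) + 1"
proof -
  have "card (init_set r i (Suc t)) \<le> card (insert (fst (the (deliv r i t))) (init_set r i t))"
    by (rule card_mono[OF _ init_set_Suc]) (simp add: init_set_fin)
  also have "\<dots> \<le> card (init_set r i t) + 1" by (simp add: card_insert_le_m1 init_set_fin card_insert_if)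
  finally show ?thesis .
qed

lemma init_trigger_card:
  assumes "init_trigger W r j = Some t0"
  shows "card (init_set r j t0) = W"
proof -
  have ex: "\<exists>t. W \<le> card (init_set r j t)" and t0: "t0 = (LEAST t. W \<le> card (init_set r j t))"
    using assms unfolding init_trigger_def by (auto split: if_splits)
  have ge: "W \<le> card (init_set r j t0)" unfolding t0 by (rule LeastI_ex[OF ex])
  show ?thesis
  proof (cases t0)
    case 0
    then show ?thesis using ge by (simp add: init_set_0)
  next
    case (Suc s)
    have "\<not> W \<le> card (init_set r j s)"
    proof
      assume "W \<le> card (init_set r j s)"
      hence "t0 \<le> s" unfolding t0 by (rule Least_le)
      with Suc show False by simp
    qed
    moreover have "card (init_set r j t0) \<le> card (init_set r j s) + 1"
      using init_set_card_Suc[of r j s] Suc by simp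
    ultimately show ?thesis using ge by linarith
  qed
qed

lemma vr_send: "valid_run n W B e r \<Longrightarrow> i < n \<Longrightarrow> j < n \<Longrightarrow> i \<notin> corrupted r \<Longrightarrow> j \<notin> corrupted r
  \<Longrightarrow> correct_sends W r j m \<Longrightarrow> \<exists>t. deliv r i t = Some (j, m)"
  unfolding valid_run_def by blast
lemma vr_recv: "valid_run n W B e r \<Longrightarrow> i < n \<Longrightarrow> j < n \<Longrightarrow> i \<notin> corrupted r \<Longrightarrow> j \<notin> corrupted r
  \<Longrightarrow> deliv r i t = Some (j, m) \<Longrightarrow> correct_sends W r j m"
  unfolding valid_run_def by blast
lemma vr_lt: "valid_run n W B e r \<Longrightarrow> i < n \<Longrightarrow> deliv r i t = Some (j, m) \<Longrightarrow> j < n"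
  unfolding valid_run_def by blast

lemma reach_init:
  assumes vr: "valid_run n W B e r" and i: "i < n" "i \<notin> corrupted r"
    and C: "W \<le> card (committee n r InitT - corrupted r)"
  shows "\<exists>t0. init_trigger W r i = Some t0"
proof -
  let ?C = "committee n r InitT - corrupted r"
  have finC: "finite ?C" unfolding committee_def by auto
  have "\<forall>j\<in>?C. \<exists>t. j \<in> init_set r i t"
  proof
    fix j assume j: "j \<in> ?C"
    hence jj: "j < n" "j \<notin> corrupted r" "sampled r InitT j" unfolding committee_def by auto
    have "correct_sends W r j (Init (input r j))" using jj unfolding correct_sends_def by simp
    then obtain t where "deliv r i t = Some (j, Init (input r j))" using vr_send[OF vr i(1) jj(1) i(2) jj(2)] by blast
    from first_proc[OF this] obtain t' m' where "processed r i t' j m'" "same_kind (Init (input r j)) m'" by blast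
    moreover then obtain v where "m' = Init v" by (cases m') auto
    ultimately have "j \<in> init_set r i (Suc t')" unfolding init_set_def using jj by auto
    thus "\<exists>t. j \<in> init_set r i t" by blast
  qed
  then obtain f where f: "\<forall>j\<in>?C. j \<in> init_set r i (f j)" by metis
  define T where "T = (\<Sum>j\<in>?C. f j)"
  have "?C \<subseteq> init_set r i T"
  proof
    fix j assume j: "j \<in> ?C"
    have "f j \<le> T" unfolding T_def using finC j by (intro member_le_sum) auto
    thus "j \<in> init_set r i T" using init_set_mono f j by blast
  qed
  hence "card ?C \<le> card (init_set r i T)" by (rule card_mono[OF init_set_fin])
  hence "\<exists>t. W \<le> card (init_set r i t)" using C by (meson le_trans)
  thus ?thesis unfolding init_trigger_def by simp
qed

definition cmsg :: "nat \<Rightarrow> 'v run \<Rightarrow> nat \<Rightarrow> nat \<Rightarrow> 'v msg" where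
  "cmsg W r j t = (if init_values r j t = {input r j}
             then Converge True (Some (input r j, init_set r j t))
             else Converge False None)"

lemma cs_conv: "correct_sends W r j (Converge b q) \<Longrightarrow> init_trigger W r j = Some t0 \<Longrightarrow>
   Converge b q = cmsg W r j t0"
  unfolding correct_sends_def cmsg_def by auto

lemma reach_conv:
  assumes vr: "valid_run n W B e r" and i: "i < n" "i \<notin> corrupted r"
    and C0: "W \<le> card (committee n r InitT - corrupted r)"
    and C: "W \<le> card (committee n r ConvT - corrupted r)"
  shows "\<exists>t0. conv_trigger W r i = Some t0"
proof -
  let ?C = "committee n r ConvT - corrupted r"
  have finC: "finite ?C" unfolding committee_def by auto
  have "\<forall>j\<in>?C. \<exists>t. j \<in> converge_set r i t"
  proof
    fix j assume j: "j \<in> ?C"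
    hence jj: "j < n" "j \<notin> corrupted r" "sampled r ConvT j" unfolding committee_def by auto
    obtain t0 where t0: "init_trigger W r j = Some t0" using reach_init[OF vr jj(1,2) C0] by blast
    have "correct_sends W r j (cmsg W r j t0)" using jj t0 unfolding correct_sends_def cmsg_def by auto
    then obtain t where "deliv r i t = Some (j, cmsg W r j t0)" using vr_send[OF vr i(1) jj(1) i(2) jj(2)] by blast
    from first_proc[OF this] obtain t' m' where "processed r i t' j m'" "same_kind (cmsg W r j t0) m'" by blast
    moreover then obtain b q where "m' = Converge b q" by (cases m') (auto simp: cmsg_def split: if_splits)
    ultimately have "j \<in> converge_set r i (Suc t')" unfolding converge_set_def using jj by auto
    thus "\<exists>t. j \<in> converge_set r i t" by blast
  qed
  then obtain f where f: "\<forall>j\<in>?C. j \<in> converge_set r i (f j)" by metis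
  define T where "T = (\<Sum>j\<in>?C. f j)"
  have "?C \<subseteq> converge_set r i T"
  proof
    fix j assume j: "j \<in> ?C"
    have "f j \<le> T" unfolding T_def using finC j by (intro member_le_sum) auto
    thus "j \<in> converge_set r i T" using conv_set_mono f j by blast
  qed
  hence "card ?C \<le> card (converge_set r i T)" by (rule card_mono[OF conv_set_fin])
  hence "\<exists>t. W \<le> card (converge_set r i t)" using C by (meson le_trans)
  thus ?thesis unfolding conv_trigger_def by simp
qed

lemma det:
  assumes vr: "valid_run n W B e r"
    and C0: "W \<le> card (committee n r InitT - corrupted r)"
    and C1: "W \<le> card (committee n r ConvT - corrupted r)"
    and C2: "card (committee n r ConvT \<inter> corrupted r) \<le> B"
    and SU: "ba_strong_unanimity n W B r" and TE: "ba_termination n W B r"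
    and i: "i < n" "i \<notin> corrupted r"
  shows "decides W r i"
proof -
  have bain: "\<forall>k<n. k \<notin> corrupted r \<longrightarrow> ba_in W B r k \<noteq> None"
  proof (intro allI impI)
    fix k assume "k < n" "k \<notin> corrupted r"
    then obtain t0 where "conv_trigger W r k = Some t0" using reach_conv[OF vr _ _ C0 C1] by blast
    thus "ba_in W B r k \<noteq> None" unfolding ba_in_def by simp
  qed
  hence "ba_out r i \<noteq> None" using TE i unfolding ba_termination_def by blast
  then obtain b where b: "ba_out r i = Some b" by blast
  show ?thesis
  proof (cases b)
    case True thus ?thesis using b unfolding decides_def by simp
  next
    case False
    have "\<not> (\<forall>k<n. k \<notin> corrupted r \<longrightarrow> ba_in W B r k = Some True)"
  proof
    assume "\<forall>k<n. k \<notin> corrupted r \<longrightarrow> ba_in W B r k = Some True"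
    hence "ba_out r i = Some True" using SU b i unfolding ba_strong_unanimity_def by blast
    with b False show False by simp
  qed
    then obtain k where k: "k < n" "k \<notin> corrupted r" "ba_in W B r k \<noteq> Some True" by blast
    then obtain tk where tk: "conv_trigger W r k = Some tk" "\<not> count r k tk < B + 1"
      using bain unfolding ba_in_def by (auto split: option.splits)
    define X where "X = {j. \<exists>t'<tk. \<exists>q. processed r k t' j (Converge True q) \<and> sampled r ConvT j}"
    have cX: "B + 1 \<le> card X" using tk(2) unfolding X_def count_def by simp
    have Xsub: "X \<subseteq> committee n r ConvT"
  proof
    fix j assume "j \<in> X"
    then obtain t' q where "processed r k t' j (Converge True q)" "sampled r ConvT j" unfolding X_def by blast
    hence "deliv r k t' = Some (j, Converge True q)" unfolding processed_def by simp
    hence "j < n" by (rule vr_lt[OF vr k(1)])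
    thus "j \<in> committee n r ConvT" unfolding committee_def using \<open>sampled r ConvT j\<close> by simp
  qed
    have "\<not> X \<subseteq> corrupted r"
    proof
      assume "X \<subseteq> corrupted r"
      hence "X \<subseteq> committee n r ConvT \<inter> corrupted r" using Xsub by blast
      hence "card X \<le> card (committee n r ConvT \<inter> corrupted r)"
        by (rule card_mono[rotated]) (simp add: committee_def)
      with C2 cX show False by simp
    qed
    then obtain j t' q where j: "j \<notin> corrupted r" "processed r k t' j (Converge True q)" "sampled r ConvT j"
      unfolding X_def by blast
    have dl: "deliv r k t' = Some (j, Converge True q)" using j(2) unfolding processed_def by simp
    have jn: "j < n" using vr_lt[OF vr k(1) dl] .
    have cs: "correct_sends W r j (Converge True q)" using vr_recv[OF vr k(1) jn k(2) j(1) dl] .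
    then obtain t0 where t0: "init_trigger W r j = Some t0" unfolding correct_sends_def by auto
    have eq: "Converge True q = cmsg W r j t0" using cs_conv[OF cs t0] .
    hence iv: "init_values r j t0 = {input r j}" and qd: "q = Some (input r j, init_set r j t0)"
      unfolding cmsg_def by (auto split: if_splits)
    have cs': "correct_sends W r j (cmsg W r j t0)" using cs eq by simp
    then obtain t1 where "deliv r i t1 = Some (j, cmsg W r j t0)" using vr_send[OF vr i(1) jn i(2) j(1)] by blast
    from first_proc[OF this] obtain t2 m' where p2: "processed r i t2 j m'" "same_kind (cmsg W r j t0) m'" by blast
    then obtain b' q' where m': "m' = Converge b' q'" by (cases m') (auto simp: cmsg_def split: if_splits)
    have dl2: "deliv r i t2 = Some (j, Converge b' q')" using p2(1) m' unfolding processed_def by simp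
    have "correct_sends W r j (Converge b' q')" using vr_recv[OF vr i(1) jn i(2) j(1) dl2] .
    from cs_conv[OF this t0] eq have "m' = Converge True q" using m' by simp
    hence proc: "processed r i t2 j (Converge True (Some (input r j, init_set r j t0)))" using p2(1) qd by simp
    have "valid_qc W r (input r j) (init_set r j t0)"
      unfolding valid_qc_def
    proof (intro conjI ballI impI)
      show "card (init_set r j t0) = W" using init_trigger_card[OF t0] .
    next
      fix x assume "x \<in> init_set r j t0"
      then obtain t' v where x: "t' < t0" "processed r j t' x (Init v)" "sampled r InitT x"
        unfolding init_set_def by blast
      show "sampled r InitT x" using x(3) .
      assume xc: "x \<notin> corrupted r"
      have "v \<in> init_values r j t0" unfolding init_values_def using x by blast
      hence v: "v = input r j" using iv by simp
      have dlx: "deliv r j t' = Some (x, Init v)" using x(2) unfolding processed_def by simp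
      have xn: "x < n" using vr_lt[OF vr jn dlx] .
      have "correct_sends W r x (Init v)" using vr_recv[OF vr jn xn j(1) xc dlx] .
      hence "v = input r x" unfolding correct_sends_def by (auto split: if_splits)
      thus "input r x = input r j" using v by simp
    qed
    moreover have "ba_out r i = Some False" using b False by simp
    ultimately show ?thesis using proc j(3) unfolding decides_def by blast
  qed
qed

lemma whp_conj:
  assumes prob: "\<And>n. prob_space (M n)" and P: "whp M P" and Q: "whp M Q"
  shows "whp M (\<lambda>n r. P n r \<and> Q n r)"
proof -
  obtain E where E: "\<forall>n. E n \<in> sets (M n) \<and> E n \<subseteq> {x \<in> space (M n). P n x}"
    "(\<lambda>n. measure (M n) (E n)) \<longlonglongrightarrow> 1" using P unfolding whp_def by blast
  obtain F where F: "\<forall>n. F n \<in> sets (M n) \<and> F n \<subseteq> {x \<in> space (M n). Q n x}"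
    "(\<lambda>n. measure (M n) (F n)) \<longlonglongrightarrow> 1" using Q unfolding whp_def by blast
  have low: "measure (M n) (E n) + measure (M n) (F n) - 1 \<le> measure (M n) (E n \<inter> F n)" for n
  proof -
    interpret prob_space "M n" by (rule prob)
    have sE: "E n \<in> sets (M n)" and sF: "F n \<in> sets (M n)" using E(1) F(1) by auto
    have "measure (M n) (E n \<union> F n) + measure (M n) (E n \<inter> F n) = measure (M n) (E n) + measure (M n) (F n)"
      using finite_measure_Union'[OF sE sF] finite_measure_Diff'[OF sF sE] by (simp add: Int_commute)
    moreover have "measure (M n) (E n \<union> F n) \<le> 1" by simp
    ultimately show ?thesis by linarith
  qed
  have up: "measure (M n) (E n \<inter> F n) \<le> 1" for n
  proof -
    interpret prob_space "M n" by (rule prob)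
    show ?thesis by simp
  qed
  have "(\<lambda>n. measure (M n) (E n) + measure (M n) (F n) - 1) \<longlonglongrightarrow> 1 + 1 - 1"
    by (rule tendsto_diff[OF tendsto_add[OF E(2) F(2)] tendsto_const])
  hence lim: "(\<lambda>n. measure (M n) (E n) + measure (M n) (F n) - 1) \<longlonglongrightarrow> 1" by simp
  have "(\<lambda>n. measure (M n) (E n \<inter> F n)) \<longlonglongrightarrow> 1"
    by (rule tendsto_sandwich[OF _ _ lim tendsto_const]) (simp_all add: low up)
  moreover have "\<forall>n. E n \<inter> F n \<in> sets (M n) \<and> E n \<inter> F n \<subseteq> {x \<in> space (M n). P n x \<and> Q n x}"
  proof
    fix n
    have "E n \<in> sets (M n)" "F n \<in> sets (M n)" using E(1) F(1) by simp_all
    hence "E n \<inter> F n \<in> sets (M n)" by (rule sets.Int)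
    moreover have "E n \<subseteq> {x \<in> space (M n). P n x}" "F n \<subseteq> {x \<in> space (M n). Q n x}" using E(1) F(1) by simp_all
    ultimately show "E n \<inter> F n \<in> sets (M n) \<and> E n \<inter> F n \<subseteq> {x \<in> space (M n). P n x \<and> Q n x}" by blast
  qed
  ultimately show ?thesis unfolding whp_def by (intro exI[of _ "\<lambda>n. E n \<inter> F n"]) simp
qed

lemma whp_mono:
  assumes "whp M P" and "\<And>n r. r \<in> space (M n) \<Longrightarrow> P n r \<Longrightarrow> Q n r"
  shows "whp M Q"
proof -
  obtain E where E: "\<forall>n. E n \<in> sets (M n) \<and> E n \<subseteq> {x \<in> space (M n). P n x}"
    "(\<lambda>n. measure (M n) (E n)) \<longlonglongrightarrow> 1" using assms(1) unfolding whp_def by blast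
  have "\<forall>n. E n \<in> sets (M n) \<and> E n \<subseteq> {x \<in> space (M n). Q n x}"
    using E(1) assms(2) by blast
  thus ?thesis using E(2) unfolding whp_def by blast
qed

theorem mainTheorem4:
  fixes M :: "nat \<Rightarrow> 'v run measure" and eps d :: "nat \<Rightarrow> real"
  assumes prob: "\<And>n. prob_space (M n)"
    and eps_bounds: "\<forall>\<^sub>F n in sequentially. 1 / (2 * ln (real n)) < eps n \<and> eps n < 1/3"
    and d_bounds: "\<forall>\<^sub>F n in sequentially. 1 / lam n < d n \<and> d n < eps n / 3 - 1 / (3 * lam n)"
    and runs: "\<And>n r. r \<in> space (M n) \<Longrightarrow> valid_run n (Wq d n) (Bq d n) (eps n) r"
    and S3: "\<And>c. whp M (\<lambda>n r. Wq d n \<le> card (committee n r c - corrupted r))"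
    and S4: "\<And>c. whp M (\<lambda>n r. card (committee n r c \<inter> corrupted r) \<le> Bq d n)"
    and S5: "\<And>c. whp M (\<lambda>n r. \<forall>X Y. X \<subseteq> committee n r c \<longrightarrow> Y \<subseteq> committee n r c \<longrightarrow>
                  card X = Wq d n \<longrightarrow> card Y = Wq d n \<longrightarrow> Bq d n + 1 \<le> card (X \<inter> Y))"
    and BA_strong_unanimity: "whp M (\<lambda>n r. ba_strong_unanimity n (Wq d n) (Bq d n) r)"
    and BA_agreement: "whp M (\<lambda>n r. ba_agreement n r)"
    and BA_termination: "whp M (\<lambda>n r. ba_termination n (Wq d n) (Bq d n) r)"
  shows "whp M (\<lambda>n r. \<forall>i < n. i \<notin> corrupted r \<longrightarrow> decides (Wq d n) r i)"
proof -
  have all: "whp M (\<lambda>n r. Wq d n \<le> card (committee n r InitT - corrupted r) \<and>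
     (Wq d n \<le> card (committee n r ConvT - corrupted r) \<and>
     (card (committee n r ConvT \<inter> corrupted r) \<le> Bq d n \<and>
     (ba_strong_unanimity n (Wq d n) (Bq d n) r \<and> ba_termination n (Wq d n) (Bq d n) r))))"
    by (intro whp_conj[OF prob] S3 S4 BA_strong_unanimity BA_termination)
  show ?thesis
  proof (rule whp_mono[OF all], intro allI impI)
    fix n r i
    assume r: "r \<in> space (M n)" and h: "Wq d n \<le> card (committee n r InitT - corrupted r) \<and>
     (Wq d n \<le> card (committee n r ConvT - corrupted r) \<and>
     (card (committee n r ConvT \<inter> corrupted r) \<le> Bq d n \<and>
     (ba_strong_unanimity n (Wq d n) (Bq d n) r \<and> ba_termination n (Wq d n) (Bq d n) r)))"
      and i: "i < n" "i \<notin> corrupted r"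
    from h have h1: "Wq d n \<le> card (committee n r InitT - corrupted r)"
      and h2: "Wq d n \<le> card (committee n r ConvT - corrupted r)"
      and h3: "card (committee n r ConvT \<inter> corrupted r) \<le> Bq d n"
      and h4: "ba_strong_unanimity n (Wq d n) (Bq d n) r"
      and h5: "ba_termination n (Wq d n) (Bq d n) r" by auto
    show "decides (Wq d n) r i" by (rule det[OF runs[OF r] h1 h2 h3 h4 h5 i])
  qed
qed

end
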